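(* Let $R$ be a ring and let $\mathcal{S}$ be a sublattice of the lattice of two-sided ideals of $R$ which is closed under arbitrary intersections and contains $\{0\}$ and $R$. Suppose that for each $I\in\mathcal{S}$ we have $I=\ker(\{\mathfrak{p}\in\mathrm{Spec}_{\mathcal{S}}(R):\mathfrak{p}\supseteq I\})$. For an open set $U$ of $\mathrm{Spec}_{\mathcal{S}}(R)$ (Jacobson topology) put $R[U]=\ker(U^c)$. Then for all open $U,V$ we have $$R[U\cup V]=R[U]+R[V]\quad\text{and}\quad R[U\cap V]=R[U]\cap R[V].$$ Consequently, if $V_1,V_2,U_1,U_2$ are open with $V_1\subseteq U_1$, $V_2\subseteq U_2$ and $U_1\setminus V_1=U_2\setminus V_2$, then there exists an isomorphism from $R[U_1]/R[V_1]$ to $R[U_2]/R[V_2]$, and this isomorphism is natural: if also $V_3\subseteq U_3$ are open with $U_3\setminus V_3=U_1\setminus V_1$, then the composition of the isomorphisms $R[U_1]/R[V_1]\to R[U_2]/R[V_2]$ and $R[U_2]/R[V_2]\to R[U_3]/R[V_3]$ equals the isomorphism $R[U_1]/R[V_1]\to R[U_3]/R[V_3]$.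
   Context: An ideal $P\in\mathcal{S}$ is $\mathcal{S}$-prime if $P\neq R$ and for all $I,J\in\mathcal{S}$, $IJ\subseteq P$ implies $I\subseteq P$ or $J\subseteq P$; $\mathrm{Spec}_{\mathcal{S}}(R)$ is the set of $\mathcal{S}$-prime ideals. For $T\subseteq\mathrm{Spec}_{\mathcal{S}}(R)$, $\ker(T)=\bigcap_{\mathfrak{p}\in T}\mathfrak{p}$ (with $\ker(\emptyset)=R$), and $U^c$ denotes complement in $\mathrm{Spec}_{\mathcal{S}}(R)$. The Jacobson topology is the topology whose closure operation is $\overline{T}=\{\mathfrak{p}\in\mathrm{Spec}_{\mathcal{S}}(R):\mathfrak{p}\supseteq\ker(T)\}$. *)

theory Defs
  imports "HOL-Algebra.Algebra"
begin

text \<open>S-prime ideals: P in S, P proper, and for all I, J in S, IJ \<subseteq> P implies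
  I \<subseteq> P or J \<subseteq> P. The condition IJ \<subseteq> P (IJ the additive subgroup generated by
  all products) is written out as: all products a b with a in I, b in J lie in P.\<close>
definition S_prime :: "('a, 'b) ring_scheme \<Rightarrow> 'a set set \<Rightarrow> 'a set \<Rightarrow> bool" where
  "S_prime R S P \<longleftrightarrow> P \<in> S \<and> P \<noteq> carrier R \<and>
     (\<forall>I\<in>S. \<forall>J\<in>S. (\<forall>a\<in>I. \<forall>b\<in>J. a \<otimes>\<^bsub>R\<^esub> b \<in> P) \<longrightarrow> I \<subseteq> P \<or> J \<subseteq> P)"

definition SpecS :: "('a, 'b) ring_scheme \<Rightarrow> 'a set set \<Rightarrow> 'a set set" where
  "SpecS R S = {P. S_prime R S P}"

text \<open>ker(T) = intersection of T, with ker({}) = R.\<close>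
definition kerS :: "('a, 'b) ring_scheme \<Rightarrow> 'a set set \<Rightarrow> 'a set" where
  "kerS R T = carrier R \<inter> \<Inter>T"

definition jclosure :: "('a, 'b) ring_scheme \<Rightarrow> 'a set set \<Rightarrow> 'a set set \<Rightarrow> 'a set set" where
  "jclosure R S T = {P \<in> SpecS R S. kerS R T \<subseteq> P}"

definition jopen :: "('a, 'b) ring_scheme \<Rightarrow> 'a set set \<Rightarrow> 'a set set \<Rightarrow> bool" where
  "jopen R S U \<longleftrightarrow> U \<subseteq> SpecS R S \<and> jclosure R S (SpecS R S - U) = SpecS R S - U"

definition Rsec :: "('a, 'b) ring_scheme \<Rightarrow> 'a set set \<Rightarrow> 'a set set \<Rightarrow> 'a set" where
  "Rsec R S U = kerS R (SpecS R S - U)"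

definition cosets :: "('a, 'b) ring_scheme \<Rightarrow> 'a set \<Rightarrow> 'a set \<Rightarrow> 'a set set" where
  "cosets R I J = (\<lambda>x. J +>\<^bsub>R\<^esub> x) ` I"

text \<open>Coset multiplication (J + x)(J + y) = J + xy, written choice-free.\<close>
definition coset_mult :: "('a, 'b) ring_scheme \<Rightarrow> 'a set \<Rightarrow> 'a set \<Rightarrow> 'a set \<Rightarrow> 'a set" where
  "coset_mult R J C D = \<Union>{J +>\<^bsub>R\<^esub> (x \<otimes>\<^bsub>R\<^esub> y) | x y. x \<in> C \<and> y \<in> D}"

text \<open>f is an isomorphism (of non-unital rings) from I1/J1 to I2/J2.\<close>
definition quot_iso ::
  "('a, 'b) ring_scheme \<Rightarrow> 'a set \<Rightarrow> 'a set \<Rightarrow> 'a set \<Rightarrow> 'a set \<Rightarrow> ('a set \<Rightarrow> 'a set) \<Rightarrow> bool" where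
  "quot_iso R I1 J1 I2 J2 f \<longleftrightarrow>
     bij_betw f (cosets R I1 J1) (cosets R I2 J2) \<and>
     (\<forall>C\<in>cosets R I1 J1. \<forall>D\<in>cosets R I1 J1.
        f (C <+>\<^bsub>R\<^esub> D) = f C <+>\<^bsub>R\<^esub> f D \<and>
        f (coset_mult R J1 C D) = coset_mult R J2 (f C) (f D))"

text \<open>The canonical map R[U1]/R[V1] \<rightarrow> R[U2]/R[V2]: a coset C is sent to the
  R[V2]-coset of any y \<in> C \<inter> R[U2]. (It depends only on the target pair.)\<close>
definition canon :: "('a, 'b) ring_scheme \<Rightarrow> 'a set set \<Rightarrow> 'a set set \<Rightarrow> 'a set set \<Rightarrow> 'a set \<Rightarrow> 'a set" where
  "canon R S U2 V2 C = \<Union>((\<lambda>y. Rsec R S V2 +>\<^bsub>R\<^esub> y) ` (C \<inter> Rsec R S U2))"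

end

theory Submission
  imports Defs
begin

locale SL = ring +
  fixes S :: "'a set set"
  assumes idl: "I \<in> S \<Longrightarrow> ideal I R"
  and sumS: "I \<in> S \<Longrightarrow> J \<in> S \<Longrightarrow> I <+>\<^bsub>R\<^esub> J \<in> S"
  and InterS: "T \<subseteq> S \<Longrightarrow> T \<noteq> {} \<Longrightarrow> \<Inter>T \<in> S"
  and carrS: "carrier R \<in> S"
  and kerI: "I \<in> S \<Longrightarrow> I = kerS R {P \<in> SpecS R S. I \<subseteq> P}"
begin

lemma Spec_S: "P \<in> SpecS R S \<Longrightarrow> P \<in> S" by (simp add: SpecS_def S_prime_def)

lemma Rs_S: "Rsec R S U \<in> S"
proof (cases "SpecS R S - U = {}")
  case True
  hence "Rsec R S U = carrier R" unfolding Rsec_def kerS_def True by simp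
  thus ?thesis by (simp add: carrS)
next
  case False
  have "SpecS R S - U \<subseteq> S" using Spec_S by blast
  hence inS: "\<Inter>(SpecS R S - U) \<in> S" using InterS False by blast
  hence "\<Inter>(SpecS R S - U) \<subseteq> carrier R" using ideal.Icarr[OF idl[OF inS]] by blast
  thus ?thesis using inS by (simp add: Rsec_def kerS_def Int_absorb1)
qed

lemma Rs_ideal: "ideal (Rsec R S U) R" by (rule idl[OF Rs_S])

lemma Rs_carr: "x \<in> Rsec R S U \<Longrightarrow> x \<in> carrier R"
  by (rule ideal.Icarr[OF Rs_ideal])

lemma Rs_mono: "U \<subseteq> V \<Longrightarrow> Rsec R S U \<subseteq> Rsec R S V"
  unfolding Rsec_def kerS_def by (intro Int_mono subset_refl Inter_anti_mono Diff_mono)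

lemma Rs_Int: "Rsec R S (U \<inter> V) = Rsec R S U \<inter> Rsec R S V"
  unfolding Rsec_def kerS_def Diff_Int Inter_Un_distrib by blast

lemma open_iff: "jopen R S U \<Longrightarrow> P \<in> SpecS R S \<Longrightarrow> (P \<notin> U \<longleftrightarrow> Rsec R S U \<subseteq> P)"
  unfolding jopen_def jclosure_def Rsec_def by blast

lemma set_add_mem: "a \<in> A \<Longrightarrow> b \<in> B \<Longrightarrow> a \<oplus> b \<in> A <+>\<^bsub>R\<^esub> B" by (auto simp: set_add_def')
lemma set_add_E: "z \<in> A <+>\<^bsub>R\<^esub> B \<Longrightarrow> \<exists>a\<in>A. \<exists>b\<in>B. z = a \<oplus> b" by (auto simp: set_add_def')

lemma I_add: "ideal J R \<Longrightarrow> a \<in> J \<Longrightarrow> b \<in> J \<Longrightarrow> a \<oplus> b \<in> J"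
  by (meson additive_subgroup.a_closed ideal_def)
lemma I_zero: "ideal J R \<Longrightarrow> \<zero> \<in> J"
  by (meson additive_subgroup.zero_closed ideal_def)
lemma I_minus: "ideal J R \<Longrightarrow> a \<in> J \<Longrightarrow> b \<in> J \<Longrightarrow> a \<ominus> b \<in> J"
  by (metis a_minus_def additive_subgroup.a_closed additive_subgroup.a_inv_closed ideal_def)
lemma I_neg: "ideal J R \<Longrightarrow> a \<in> J \<Longrightarrow> \<ominus> a \<in> J"
  by (meson additive_subgroup.a_inv_closed ideal_def)

lemma Rs_Un: assumes "jopen R S U" "jopen R S V"
  shows "Rsec R S (U \<union> V) = Rsec R S U <+>\<^bsub>R\<^esub> Rsec R S V"
proof
  show "Rsec R S U <+>\<^bsub>R\<^esub> Rsec R S V \<subseteq> Rsec R S (U \<union> V)"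
  proof
    fix z assume "z \<in> Rsec R S U <+>\<^bsub>R\<^esub> Rsec R S V"
    then obtain a b where a: "a \<in> Rsec R S U" and b: "b \<in> Rsec R S V" and z: "z = a \<oplus> b"
      using set_add_E by blast
    have "a \<in> Rsec R S (U\<union>V)" "b \<in> Rsec R S (U\<union>V)"
      using a b Rs_mono[of U "U\<union>V"] Rs_mono[of V "U\<union>V"] by auto
    thus "z \<in> Rsec R S (U\<union>V)" using z I_add[OF Rs_ideal] by blast
  qed
  show "Rsec R S (U \<union> V) \<subseteq> Rsec R S U <+>\<^bsub>R\<^esub> Rsec R S V"
  proof
    fix z assume z: "z \<in> Rsec R S (U \<union> V)"
    let ?I = "Rsec R S U <+>\<^bsub>R\<^esub> Rsec R S V"
    have IS: "?I \<in> S" using sumS Rs_S by blast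
    have sub1: "Rsec R S U \<subseteq> ?I"
    proof
      fix a assume a: "a \<in> Rsec R S U"
      have "a \<oplus> \<zero> \<in> ?I" using set_add_mem[OF a I_zero[OF Rs_ideal]] .
      thus "a \<in> ?I" using Rs_carr[OF a] by simp
    qed
    have sub2: "Rsec R S V \<subseteq> ?I"
    proof
      fix a assume a: "a \<in> Rsec R S V"
      have "\<zero> \<oplus> a \<in> ?I" using set_add_mem[OF I_zero[OF Rs_ideal] a] .
      thus "a \<in> ?I" using Rs_carr[OF a] by simp
    qed
    have E: "?I = kerS R {P \<in> SpecS R S. ?I \<subseteq> P}" by (rule kerI[OF IS])
    have "z \<in> kerS R {P \<in> SpecS R S. ?I \<subseteq> P}"
      unfolding kerS_def
    proof
      show "z \<in> carrier R" using z by (simp add: Rsec_def kerS_def)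
      show "z \<in> \<Inter>{P \<in> SpecS R S. ?I \<subseteq> P}"
      proof
        fix P assume P: "P \<in> {P \<in> SpecS R S. ?I \<subseteq> P}"
        hence "P \<notin> U" "P \<notin> V" using open_iff assms sub1 sub2 by blast+
        thus "z \<in> P" using z P by (auto simp: Rsec_def kerS_def)
      qed
    qed
    thus "z \<in> ?I" by (subst E)
  qed
qed

lemma open_Int: assumes "jopen R S U" "jopen R S V" shows "jopen R S (U \<inter> V)"
  unfolding jopen_def
proof
  show "U \<inter> V \<subseteq> SpecS R S" using assms by (auto simp: jopen_def)
  have key: "\<forall>P \<in> SpecS R S. (Rsec R S (U\<inter>V) \<subseteq> P \<longleftrightarrow> P \<notin> U \<inter> V)"
  proof
    fix P assume P: "P \<in> SpecS R S"
    show "(Rsec R S (U\<inter>V) \<subseteq> P \<longleftrightarrow> P \<notin> U \<inter> V)"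
    proof
      assume h: "Rsec R S (U\<inter>V) \<subseteq> P"
      have "\<forall>a\<in>Rsec R S U. \<forall>b\<in>Rsec R S V. a \<otimes> b \<in> P"
      proof (intro ballI)
        fix a b assume a: "a \<in> Rsec R S U" and b: "b \<in> Rsec R S V"
        have "a \<otimes> b \<in> Rsec R S U" using ideal.I_r_closed[OF Rs_ideal a Rs_carr[OF b]] .
        moreover have "a \<otimes> b \<in> Rsec R S V" using ideal.I_l_closed[OF Rs_ideal b Rs_carr[OF a]] .
        ultimately show "a \<otimes> b \<in> P" using h Rs_Int by blast
      qed
      hence "Rsec R S U \<subseteq> P \<or> Rsec R S V \<subseteq> P" using P Rs_S unfolding SpecS_def S_prime_def by blast
      thus "P \<notin> U \<inter> V" using open_iff assms P by blast
    next
      assume "P \<notin> U \<inter> V"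
      thus "Rsec R S (U\<inter>V) \<subseteq> P" using open_iff assms P Rs_Int by blast
    qed
  qed
  have eq: "kerS R (SpecS R S - U \<inter> V) = Rsec R S (U\<inter>V)" by (simp add: Rsec_def)
  show "jclosure R S (SpecS R S - U \<inter> V) = SpecS R S - U \<inter> V"
    unfolding jclosure_def eq using key by blast
qed

lemma rcos_mem: assumes "ideal J R" "x \<in> carrier R"
  shows "z \<in> J +> x \<longleftrightarrow> z \<in> carrier R \<and> z \<ominus> x \<in> J"
proof
  assume "z \<in> J +> x"
  then obtain h where h: "h \<in> J" and z: "z = h \<oplus> x" unfolding a_r_coset_def' by blast
  have hc: "h \<in> carrier R" using ideal.Icarr[OF assms(1) h] .
  have "z \<ominus> x = h" using z hc assms(2) by algebra
  thus "z \<in> carrier R \<and> z \<ominus> x \<in> J" using z hc assms(2) h by simp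
next
  assume h: "z \<in> carrier R \<and> z \<ominus> x \<in> J"
  have "z = (z \<ominus> x) \<oplus> x" using h assms(2) by algebra
  thus "z \<in> J +> x" using h unfolding a_r_coset_def' by blast
qed

lemma rcos_eq: "ideal J R \<Longrightarrow> x \<in> carrier R \<Longrightarrow> y \<in> carrier R \<Longrightarrow> x \<ominus> y \<in> J \<Longrightarrow> J +> x = J +> y"
  using quotient_eq_iff_same_a_r_cos by blast
lemma rcos_eqD: "ideal J R \<Longrightarrow> x \<in> carrier R \<Longrightarrow> y \<in> carrier R \<Longrightarrow> J +> x = J +> y \<Longrightarrow> x \<ominus> y \<in> J"
  using quotient_eq_iff_same_a_r_cos by blast

lemma decomp:
  assumes "jopen R S Ua" "jopen R S Va" "jopen R S W" "Va \<subseteq> Ua" "Ua - Va \<subseteq> W" "x \<in> Rsec R S Ua"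
  shows "\<exists>y \<in> Rsec R S (Ua \<inter> W). x \<ominus> y \<in> Rsec R S Va"
proof -
  have "Ua = Va \<union> (Ua \<inter> W)" using assms by blast
  hence "Rsec R S Ua = Rsec R S Va <+>\<^bsub>R\<^esub> Rsec R S (Ua \<inter> W)"
    using Rs_Un[OF assms(2) open_Int[OF assms(1,3)]] by simp
  then obtain a b where a: "a \<in> Rsec R S Va" and b: "b \<in> Rsec R S (Ua \<inter> W)" and x: "x = a \<oplus> b"
    using assms(6) set_add_E by blast
  have "x \<ominus> b = a" using x Rs_carr[OF a] Rs_carr[OF b] by algebra
  thus ?thesis using a b by auto
qed

lemma canon_char:
  assumes "Ua - Va = Ub - Vb" "x \<in> carrier R" "y \<in> Rsec R S Ub" "x \<ominus> y \<in> Rsec R S Va"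
  shows "canon R S Ub Vb (Rsec R S Va +> x) = Rsec R S Vb +> y"
proof -
  let ?C = "Rsec R S Va +> x"
  have yc: "y \<in> carrier R" using Rs_carr[OF assms(3)] .
  have "y \<ominus> x = \<ominus> (x \<ominus> y)" using yc assms(2) by algebra
  hence "y \<ominus> x \<in> Rsec R S Va" using I_neg[OF Rs_ideal assms(4)] by simp
  hence ymem: "y \<in> ?C \<inter> Rsec R S Ub" using rcos_mem[OF Rs_ideal assms(2)] yc assms(3) by blast
  have sub: "Rsec R S (Va \<inter> Ub) \<subseteq> Rsec R S Vb" using assms(1) by (intro Rs_mono) blast
  have all: "Rsec R S Vb +> z = Rsec R S Vb +> y" if z: "z \<in> ?C \<inter> Rsec R S Ub" for z
  proof -
    have zc: "z \<in> carrier R" and zx: "z \<ominus> x \<in> Rsec R S Va"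
      using z rcos_mem[OF Rs_ideal assms(2)] by blast+
    have "z \<ominus> y = (z \<ominus> x) \<oplus> (x \<ominus> y)" using zc yc assms(2) by algebra
    hence "z \<ominus> y \<in> Rsec R S Va" using I_add[OF Rs_ideal zx assms(4)] by simp
    moreover have "z \<ominus> y \<in> Rsec R S Ub" using I_minus[OF Rs_ideal _ assms(3)] z by blast
    ultimately have "z \<ominus> y \<in> Rsec R S Vb" using sub Rs_Int by blast
    thus ?thesis using rcos_eq[OF Rs_ideal zc yc] by blast
  qed
  have "(\<lambda>z. Rsec R S Vb +> z) ` (?C \<inter> Rsec R S Ub) = {Rsec R S Vb +> y}"
    using ymem all by blast
  thus ?thesis unfolding canon_def by simp
qed

lemma cm_eq: "coset_mult R J C D = [mod J:] C \<Otimes> D"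
  unfolding coset_mult_def rcoset_mult_def by blast

lemma part2:
  assumes o: "jopen R S U1" "jopen R S V1" "jopen R S U2" "jopen R S V2"
    and s: "V1 \<subseteq> U1" "V2 \<subseteq> U2" and d: "U1 - V1 = U2 - V2"
  shows "quot_iso R (Rsec R S U1) (Rsec R S V1) (Rsec R S U2) (Rsec R S V2) (canon R S U2 V2)"
proof -
  let ?f = "canon R S U2 V2"
  let ?c1 = "cosets R (Rsec R S U1) (Rsec R S V1)"
  let ?c2 = "cosets R (Rsec R S U2) (Rsec R S V2)"
  have rep: "\<exists>y. y \<in> Rsec R S U1 \<and> y \<in> Rsec R S U2 \<and> C = Rsec R S V1 +> y" if C: "C \<in> ?c1" for C
  proof -
    obtain x where x: "x \<in> Rsec R S U1" and Cx: "C = Rsec R S V1 +> x" using C unfolding cosets_def by blast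
    obtain y where y: "y \<in> Rsec R S (U1 \<inter> U2)" and xy: "x \<ominus> y \<in> Rsec R S V1"
      using decomp[OF o(1,2,3) s(1) _ x] d by blast
    have "C = Rsec R S V1 +> y" using Cx rcos_eq[OF Rs_ideal Rs_carr[OF x] Rs_carr[OF y] xy] by simp
    thus ?thesis using y by (intro exI[of _ y]) (simp add: Rs_Int)
  qed
  have fval: "?f (Rsec R S V1 +> y) = Rsec R S V2 +> y" if y: "y \<in> Rsec R S U2" for y
  proof -
    have yc: "y \<in> carrier R" using Rs_carr[OF y] .
    have "y \<ominus> y = \<zero>" using yc by algebra
    hence "y \<ominus> y \<in> Rsec R S V1" using I_zero[OF Rs_ideal] by simp
    thus ?thesis using canon_char[OF d yc y] by simp
  qed
  have inj: "inj_on ?f ?c1"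
  proof (rule inj_onI)
    fix C D assume C: "C \<in> ?c1" and D: "D \<in> ?c1" and eq: "?f C = ?f D"
    obtain y where y1: "y \<in> Rsec R S U1" and y2: "y \<in> Rsec R S U2" and Cy: "C = Rsec R S V1 +> y"
      using rep[OF C] by blast
    obtain y' where y1': "y' \<in> Rsec R S U1" and y2': "y' \<in> Rsec R S U2" and Dy: "D = Rsec R S V1 +> y'"
      using rep[OF D] by blast
    have "Rsec R S V2 +> y = Rsec R S V2 +> y'" using eq Cy Dy fval y2 y2' by simp
    hence a: "y \<ominus> y' \<in> Rsec R S V2" using rcos_eqD[OF Rs_ideal Rs_carr[OF y1] Rs_carr[OF y1']] by blast
    have b: "y \<ominus> y' \<in> Rsec R S U1" using I_minus[OF Rs_ideal y1 y1'] .
    have "Rsec R S (V2 \<inter> U1) \<subseteq> Rsec R S V1" using d by (intro Rs_mono) blast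
    hence "y \<ominus> y' \<in> Rsec R S V1" using a b by (auto simp: Rs_Int)
    thus "C = D" using Cy Dy rcos_eq[OF Rs_ideal Rs_carr[OF y1] Rs_carr[OF y1']] by simp
  qed
  have img: "?f ` ?c1 = ?c2"
  proof
    show "?f ` ?c1 \<subseteq> ?c2"
    proof
      fix E assume "E \<in> ?f ` ?c1"
      then obtain C where C: "C \<in> ?c1" and E: "E = ?f C" by blast
      obtain y where y2: "y \<in> Rsec R S U2" and Cy: "C = Rsec R S V1 +> y"
        using rep[OF C] by blast
      have "E = Rsec R S V2 +> y" using E Cy fval[OF y2] by simp
      thus "E \<in> ?c2" using y2 unfolding cosets_def by blast
    qed
    show "?c2 \<subseteq> ?f ` ?c1"
    proof
      fix E assume "E \<in> ?c2"
      then obtain z where z: "z \<in> Rsec R S U2" and Ez: "E = Rsec R S V2 +> z" unfolding cosets_def by blast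
      obtain y where y: "y \<in> Rsec R S (U2 \<inter> U1)" and zy: "z \<ominus> y \<in> Rsec R S V2"
        using decomp[OF o(3,4,1) s(2) _ z] d by blast
      have y1: "y \<in> Rsec R S U1" and y2: "y \<in> Rsec R S U2" using y by (simp_all add: Rs_Int)
      have "E = Rsec R S V2 +> y" using Ez rcos_eq[OF Rs_ideal Rs_carr[OF z] Rs_carr[OF y] zy] by simp
      hence "E = ?f (Rsec R S V1 +> y)" using fval[OF y2] by simp
      moreover have "Rsec R S V1 +> y \<in> ?c1" using y1 unfolding cosets_def by blast
      ultimately show "E \<in> ?f ` ?c1" by blast
    qed
  qed
  have hom: "?f (C <+>\<^bsub>R\<^esub> D) = ?f C <+>\<^bsub>R\<^esub> ?f D \<and>
        ?f (coset_mult R (Rsec R S V1) C D) = coset_mult R (Rsec R S V2) (?f C) (?f D)"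
    if C: "C \<in> ?c1" and D: "D \<in> ?c1" for C D
  proof -
    obtain y where y1: "y \<in> Rsec R S U1" and y2: "y \<in> Rsec R S U2" and Cy: "C = Rsec R S V1 +> y"
      using rep[OF C] by blast
    obtain y' where y1': "y' \<in> Rsec R S U1" and y2': "y' \<in> Rsec R S U2" and Dy: "D = Rsec R S V1 +> y'"
      using rep[OF D] by blast
    have yc: "y \<in> carrier R" and yc': "y' \<in> carrier R" using Rs_carr y1 y1' by blast+
    have s1: "C <+>\<^bsub>R\<^esub> D = Rsec R S V1 +> (y \<oplus> y')"
      using Cy Dy ideal.a_rcos_sum[OF Rs_ideal yc yc'] by simp
    have s2: "?f C <+>\<^bsub>R\<^esub> ?f D = Rsec R S V2 +> (y \<oplus> y')"
      using Cy Dy fval y2 y2' ideal.a_rcos_sum[OF Rs_ideal yc yc'] by simp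
    have m1: "coset_mult R (Rsec R S V1) C D = Rsec R S V1 +> (y \<otimes> y')"
      using Cy Dy ideal.rcoset_mult_add[OF Rs_ideal yc yc'] cm_eq by simp
    have m2: "coset_mult R (Rsec R S V2) (?f C) (?f D) = Rsec R S V2 +> (y \<otimes> y')"
      using Cy Dy fval y2 y2' ideal.rcoset_mult_add[OF Rs_ideal yc yc'] cm_eq by simp
    have "y \<oplus> y' \<in> Rsec R S U2" using I_add[OF Rs_ideal y2 y2'] .
    moreover have "y \<otimes> y' \<in> Rsec R S U2" using ideal.I_l_closed[OF Rs_ideal y2' yc] .
    ultimately show ?thesis using s1 s2 m1 m2 fval[of "y \<oplus> y'"] fval[of "y \<otimes> y'"] by simp
  qed
  show ?thesis unfolding quot_iso_def bij_betw_def
  proof (intro conjI ballI)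
    show "inj_on ?f ?c1" by (rule inj)
    show "?f ` ?c1 = ?c2" by (rule img)
  next
    fix C D assume "C \<in> ?c1" "D \<in> ?c1"
    note h = hom[OF this]
    show "?f (C <+>\<^bsub>R\<^esub> D) = ?f C <+>\<^bsub>R\<^esub> ?f D" using h by (rule conjunct1)
  next
    fix C D assume "C \<in> ?c1" "D \<in> ?c1"
    note h = hom[OF this]
    show "?f (coset_mult R (Rsec R S V1) C D) = coset_mult R (Rsec R S V2) (?f C) (?f D)" using h by (rule conjunct2)
  qed
qed

lemma part3:
  assumes o: "jopen R S U1" "jopen R S V1" "jopen R S U2" "jopen R S V2" "jopen R S U3" "jopen R S V3"
    and s: "V1 \<subseteq> U1" "V2 \<subseteq> U2" "V3 \<subseteq> U3" and d: "U1 - V1 = U2 - V2" "U3 - V3 = U1 - V1"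
    and C: "C \<in> cosets R (Rsec R S U1) (Rsec R S V1)"
  shows "canon R S U3 V3 (canon R S U2 V2 C) = canon R S U3 V3 C"
proof -
  obtain x where x: "x \<in> Rsec R S U1" and Cx: "C = Rsec R S V1 +> x" using C unfolding cosets_def by blast
  have "U1 - V1 \<subseteq> U2 \<inter> U3" using d by blast
  then obtain y where y: "y \<in> Rsec R S (U1 \<inter> (U2 \<inter> U3))" and xy: "x \<ominus> y \<in> Rsec R S V1"
    using decomp[OF o(1,2) open_Int[OF o(3,5)] s(1) _ x] by blast
  have y2: "y \<in> Rsec R S U2" and y3: "y \<in> Rsec R S U3" using y by (simp_all add: Rs_Int)
  have yc: "y \<in> carrier R" using Rs_carr[OF y2] .
  have xc: "x \<in> carrier R" using Rs_carr[OF x] .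
  have "y \<ominus> y = \<zero>" using yc by algebra
  hence yy: "y \<ominus> y \<in> Rsec R S V2" using I_zero[OF Rs_ideal] by simp
  have e1: "canon R S U2 V2 C = Rsec R S V2 +> y" using canon_char[OF d(1) xc y2 xy] Cx by simp
  have e2: "canon R S U3 V3 (Rsec R S V2 +> y) = Rsec R S V3 +> y"
    using canon_char[OF _ yc y3 yy] d by simp
  have e3: "canon R S U3 V3 C = Rsec R S V3 +> y"
    using canon_char[OF _ xc y3 xy] d Cx by simp
  show ?thesis using e1 e2 e3 by simp
qed

end

theorem lemma3p5:
  fixes R :: "('a, 'b) ring_scheme" and S :: "'a set set"
  assumes "ring R"
    and "\<forall>I\<in>S. ideal I R"
    and "\<forall>I\<in>S. \<forall>J\<in>S. I <+>\<^bsub>R\<^esub> J \<in> S"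
    and "\<forall>I\<in>S. \<forall>J\<in>S. I \<inter> J \<in> S"
    and "\<forall>T. T \<subseteq> S \<and> T \<noteq> {} \<longrightarrow> \<Inter>T \<in> S"
    and "{\<zero>\<^bsub>R\<^esub>} \<in> S"
    and "carrier R \<in> S"
    and "\<forall>I\<in>S. I = kerS R {P \<in> SpecS R S. I \<subseteq> P}"
  shows "(\<forall>U V. jopen R S U \<and> jopen R S V \<longrightarrow>
            Rsec R S (U \<union> V) = Rsec R S U <+>\<^bsub>R\<^esub> Rsec R S V \<and>
            Rsec R S (U \<inter> V) = Rsec R S U \<inter> Rsec R S V)
       \<and> (\<forall>U1 V1 U2 V2. jopen R S U1 \<and> jopen R S V1 \<and> jopen R S U2 \<and> jopen R S V2 \<and>
            V1 \<subseteq> U1 \<and> V2 \<subseteq> U2 \<and> U1 - V1 = U2 - V2 \<longrightarrow>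
            quot_iso R (Rsec R S U1) (Rsec R S V1) (Rsec R S U2) (Rsec R S V2) (canon R S U2 V2))
       \<and> (\<forall>U1 V1 U2 V2 U3 V3. jopen R S U1 \<and> jopen R S V1 \<and> jopen R S U2 \<and> jopen R S V2 \<and>
            jopen R S U3 \<and> jopen R S V3 \<and>
            V1 \<subseteq> U1 \<and> V2 \<subseteq> U2 \<and> V3 \<subseteq> U3 \<and> U1 - V1 = U2 - V2 \<and> U3 - V3 = U1 - V1 \<longrightarrow>
            (\<forall>C\<in>cosets R (Rsec R S U1) (Rsec R S V1).
               canon R S U3 V3 (canon R S U2 V2 C) = canon R S U3 V3 C))"
proof -
  interpret SL R S
    apply (rule SL.intro[OF assms(1)])
    apply (rule SL_axioms.intro)
        apply (erule assms(2)[rule_format])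
       apply (erule (1) assms(3)[rule_format])
      apply (rule assms(5)[rule_format], rule conjI, assumption, assumption)
     apply (rule assms(7))
    apply (erule assms(8)[rule_format])
    done
  show ?thesis
  proof (intro conjI allI impI ballI)
    fix U V assume "jopen R S U \<and> jopen R S V"
    thus "Rsec R S (U \<union> V) = Rsec R S U <+>\<^bsub>R\<^esub> Rsec R S V" using Rs_Un by blast
  next
    fix U V show "Rsec R S (U \<inter> V) = Rsec R S U \<inter> Rsec R S V" by (rule Rs_Int)
  next
    fix U1 V1 U2 V2 assume h: "jopen R S U1 \<and> jopen R S V1 \<and> jopen R S U2 \<and> jopen R S V2 \<and>
            V1 \<subseteq> U1 \<and> V2 \<subseteq> U2 \<and> U1 - V1 = U2 - V2"
    show "quot_iso R (Rsec R S U1) (Rsec R S V1) (Rsec R S U2) (Rsec R S V2) (canon R S U2 V2)"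
      by (rule part2) (use h in auto)
  next
    fix U1 V1 U2 V2 U3 V3 C assume h: "jopen R S U1 \<and> jopen R S V1 \<and> jopen R S U2 \<and> jopen R S V2 \<and>
            jopen R S U3 \<and> jopen R S V3 \<and>
            V1 \<subseteq> U1 \<and> V2 \<subseteq> U2 \<and> V3 \<subseteq> U3 \<and> U1 - V1 = U2 - V2 \<and> U3 - V3 = U1 - V1"
      and C: "C \<in> cosets R (Rsec R S U1) (Rsec R S V1)"
    show "canon R S U3 V3 (canon R S U2 V2 C) = canon R S U3 V3 C"
      by (rule part3[OF _ _ _ _ _ _ _ _ _ _ _ C]) (use h in auto)
  qed
qed

end
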